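(* Let $f,g:\mathbb{R}^n\to[0,+\infty)$ and $h_1,h_2:\mathbb{R}^n\to\mathbb{R}$, let $C\subseteq\mathbb{R}^n$ be closed and convex, $\Omega:=\{x\in\mathbb{R}^n:g(x)\neq0\}$, $C\cap\Omega\neq\emptyset$, and assume: $f$ is convex; $g$ is differentiable with locally Lipschitz gradient on $\mathbb{R}^n$; $h_1$ is differentiable with locally Lipschitz gradient on $\mathbb{R}^n$; $h_2$ is convex. If $x^\star$ is a local minimizer of the problem $\min\{f^2(x)/g(x)+h_1(x)-h_2(x):x\in C\cap\Omega\}$, then with $c_\star=f(x^\star)/g(x^\star)$ it holds that $$0\in\partial(2c_\star f+\iota_C)(x^\star)-c_\star^2\nabla g(x^\star)+\nabla h_1(x^\star)-\partial h_2(x^\star).$$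
   Context: $\iota_C$ is the indicator function of $C$ ($0$ on $C$, $+\infty$ off $C$). $\partial$ denotes the limiting (Mordukhovich) subdifferential, which coincides with the convex subdifferential for convex functions. *)

theory Defs
  imports "HOL-Analysis.Analysis" "HOL-Library.Extended_Real"
begin

definition ind_fun :: "'a set \<Rightarrow> 'a \<Rightarrow> ereal" where
  "ind_fun C x = (if x \<in> C then 0 else \<infinity>)"

text \<open>Subdifferential (of convex analysis) of an extended-real valued function at x.
  For convex functions it coincides with the limiting (Mordukhovich) subdifferential.\<close>
definition subdiff :: "('a::real_inner \<Rightarrow> ereal) \<Rightarrow> 'a \<Rightarrow> 'a set" where
  "subdiff \<phi> x = {v. \<bar>\<phi> x\<bar> \<noteq> \<infinity> \<and> (\<forall>y. \<phi> x + ereal (v \<bullet> (y - x)) \<le> \<phi> y)}"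

end

theory Submission
  imports Defs
begin

lemma line_deriv:
  fixes g :: "'a::euclidean_space \<Rightarrow> real"
  assumes "GDERIV g x :> D"
  shows "((\<lambda>t. g (x + t *\<^sub>R d)) has_real_derivative (d \<bullet> D)) (at 0)"
proof -
  have 1: "((\<lambda>t::real. x + t *\<^sub>R d) has_derivative (\<lambda>t. t *\<^sub>R d)) (at 0)"
    by (auto intro!: derivative_eq_intros)
  have 2: "(g has_derivative (\<lambda>h. h \<bullet> D)) (at (x + 0 *\<^sub>R d))"
    using assms by (simp add: gderiv_def)
  have "((\<lambda>t. g (x + t *\<^sub>R d)) has_derivative (\<lambda>t. (t *\<^sub>R d) \<bullet> D)) (at 0)"
    using has_derivative_compose[OF 1 2] by simp
  then show ?thesis
    by (rule has_derivative_imp_has_field_derivative) (simp add: mult.commute)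
qed

lemma subgrad_exists:
  fixes h :: "'a::euclidean_space \<Rightarrow> real"
  assumes "convex_on UNIV h"
  shows "\<exists>w. \<forall>y. h x + w \<bullet> (y - x) \<le> h y"
proof -
  define S where "S = {(x, r) | r. r < h x}"
  define T where "T = epigraph UNIV h"
  have cS: "convex S"
  proof -
    have "S = {x} \<times> {..<h x}" unfolding S_def by auto
    then show ?thesis by (simp add: convex_Times)
  qed
  have cT: "convex T" unfolding T_def using assms by (rule convex_epigraphI)
  have ne1: "S \<noteq> {}" unfolding S_def
    by (auto intro!: exI[of _ "h x - 1"])
  have "(x, h x) \<in> T" unfolding T_def by (simp add: mem_epigraph)
  then have ne2: "T \<noteq> {}" by blast
  note ne = ne1 ne2
  have dj: "S \<inter> T = {}" unfolding S_def T_def by (auto simp: mem_epigraph)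
  obtain ab \<beta> where ab: "ab \<noteq> 0" "\<forall>z\<in>S. ab \<bullet> z \<le> \<beta>" "\<forall>z\<in>T. ab \<bullet> z \<ge> \<beta>"
    using separating_hyperplane_sets[OF cS cT ne dj] by blast
  obtain a b where abd: "ab = (a, b)" by (cases ab)
  have Tle: "a \<bullet> y + b * r \<ge> \<beta>" if "h y \<le> r" for y r
  proof -
    have "(y, r) \<in> T" unfolding T_def using that by (simp add: mem_epigraph)
    then show ?thesis using ab(3) abd by force
  qed
  have Sle: "a \<bullet> x + b * r \<le> \<beta>" if "r < h x" for r
    using ab(2) that abd unfolding S_def by auto
  have b0: "b \<ge> 0"
  proof (rule ccontr)
    assume "\<not> b \<ge> 0"
    then have "b < 0" by simp
    have "a \<bullet> x + b * (h x + (\<bar>\<beta>\<bar> + \<bar>a \<bullet> x\<bar> + 1) / (- b)) \<ge> \<beta>"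
      by (rule Tle) (use \<open>b < 0\<close> in \<open>simp add: field_simps\<close>)
    moreover have "b * (h x + (\<bar>\<beta>\<bar> + \<bar>a \<bullet> x\<bar> + 1) / (- b)) = b * h x - (\<bar>\<beta>\<bar> + \<bar>a \<bullet> x\<bar> + 1)"
      using \<open>b < 0\<close> by (simp add: field_simps)
    moreover have "b * h x \<le> b * (h x - 1) + 0" using \<open>b < 0\<close> by (simp add: algebra_simps)
    moreover have "a \<bullet> x + b * (h x - 1) \<le> \<beta>" by (rule Sle) simp
    ultimately show False by linarith
  qed
  have bpos: "b > 0"
  proof (rule ccontr)
    assume "\<not> b > 0"
    with b0 have "b = 0" by simp
    have "a \<bullet> (x - a) \<ge> \<beta>" using Tle[of "x - a" "h (x - a)"] \<open>b = 0\<close> by simp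
    moreover have "a \<bullet> x \<le> \<beta>" using Sle[of "h x - 1"] \<open>b = 0\<close> by simp
    ultimately have "a \<bullet> a \<le> 0" by (simp add: inner_diff_right)
    then have "a = 0" by (metis inner_eq_zero_iff inner_ge_zero order_antisym)
    with \<open>b = 0\<close> abd ab(1) show False by (simp add: zero_prod_def)
  qed
  have key: "a \<bullet> x + b * h x \<le> \<beta>"
  proof (rule ccontr)
    assume nk: "\<not> ?thesis"
    define \<epsilon> where "\<epsilon> = (a \<bullet> x + b * h x - \<beta>) / (2 * b)"
    have "\<epsilon> > 0" using nk bpos unfolding \<epsilon>_def by (simp add: field_simps)
    have "a \<bullet> x + b * (h x - \<epsilon>) \<le> \<beta>" by (rule Sle) (use \<open>\<epsilon> > 0\<close> in simp)
    moreover have "b * (h x - \<epsilon>) = b * h x - (a \<bullet> x + b * h x - \<beta>) / 2"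
      unfolding \<epsilon>_def using bpos by (simp add: field_simps)
    ultimately have "a \<bullet> x + (b * h x - (a \<bullet> x + b * h x - \<beta>) / 2) \<le> \<beta>" by simp
    then show False using nk by (simp add: field_simps)
  qed
  show ?thesis
  proof (intro exI allI)
    fix y
    have "a \<bullet> y + b * h y \<ge> a \<bullet> x + b * h x" using Tle[of y "h y"] key by simp
    then have "b * (h x + (- (1 / b) *\<^sub>R a) \<bullet> (y - x)) \<le> b * h y"
      using bpos by (simp add: algebra_simps inner_diff_right)
    then show "h x + (- (1 / b) *\<^sub>R a) \<bullet> (y - x) \<le> h y"
      using bpos by simp
  qed
qed

theorem theorem4p1:
  fixes f g h1 h2 :: "'a::euclidean_space \<Rightarrow> real"
    and Dg Dh1 :: "'a \<Rightarrow> 'a"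
    and C :: "'a set" and xs :: 'a
  assumes f_nonneg: "\<And>x. f x \<ge> 0"
    and g_nonneg: "\<And>x. g x \<ge> 0"
    and C_closed: "closed C" and C_convex: "convex C"
    and nonempty: "C \<inter> {x. g x \<noteq> 0} \<noteq> {}"
    and f_convex: "convex_on UNIV f"
    and g_grad: "\<And>x. GDERIV g x :> Dg x"
    and g_lip: "\<And>x. \<exists>e>0. \<exists>L. L-lipschitz_on (ball x e) Dg"
    and h1_grad: "\<And>x. GDERIV h1 x :> Dh1 x"
    and h1_lip: "\<And>x. \<exists>e>0. \<exists>L. L-lipschitz_on (ball x e) Dh1"
    and h2_convex: "convex_on UNIV h2"
    and xs_feas: "xs \<in> C \<inter> {x. g x \<noteq> 0}"
    and xs_locmin: "\<exists>e>0. \<forall>y\<in>C \<inter> {x. g x \<noteq> 0} \<inter> ball xs e.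
        (f xs)\<^sup>2 / g xs + h1 xs - h2 xs \<le> (f y)\<^sup>2 / g y + h1 y - h2 y"
  shows "let c = f xs / g xs in
    \<exists>u \<in> subdiff (\<lambda>y. ereal (2 * c * f y) + ind_fun C y) xs.
    \<exists>w \<in> subdiff (\<lambda>y. ereal (h2 y)) xs.
      0 = u - c\<^sup>2 *\<^sub>R Dg xs + Dh1 xs - w"
proof -
  obtain e where e: "e > 0" and lm: "\<And>y. y \<in> C \<Longrightarrow> g y \<noteq> 0 \<Longrightarrow> y \<in> ball xs e \<Longrightarrow>
        (f xs)\<^sup>2 / g xs + h1 xs - h2 xs \<le> (f y)\<^sup>2 / g y + h1 y - h2 y"
    using xs_locmin by blast
  define c where "c = f xs / g xs"
  have xsC: "xs \<in> C" and gs0: "g xs \<noteq> 0" using xs_feas by auto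
  have gspos: "g xs > 0" using gs0 g_nonneg[of xs] by linarith
  have fxs: "f xs = c * g xs" unfolding c_def using gs0 by simp
  have c0: "c \<ge> 0" unfolding c_def using f_nonneg[of xs] gspos by simp
  have "isCont g xs"
    using g_grad[of xs] unfolding gderiv_def by (rule has_derivative_continuous)
  then obtain \<delta> where \<delta>: "\<delta> > 0" "\<And>y. dist xs y < \<delta> \<Longrightarrow> g y \<noteq> 0"
    using continuous_at_avoid[of xs g 0] gs0 by blast
  obtain w where w: "\<And>y. h2 xs + w \<bullet> (y - xs) \<le> h2 y"
    using subgrad_exists[OF h2_convex, of xs] by blast
  define u where "u = c\<^sup>2 *\<^sub>R Dg xs - Dh1 xs + w"
  have main: "2 * c * f xs + u \<bullet> (y - xs) \<le> 2 * c * f y" if yC: "y \<in> C" for y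
  proof -
    define d where "d = y - xs"
    define \<Delta> where "\<Delta> = f y - f xs"
    define r where "r = min e \<delta>"
    have r: "r > 0" using e \<delta> unfolding r_def by simp
    define t0 where "t0 = min 1 (r / (norm d + 1))"
    have nd: "norm d + 1 > 0" by (smt (verit) norm_ge_zero)
    have t0: "t0 > 0" using r nd unfolding t0_def by simp
    define \<phi> where "\<phi> = (\<lambda>t. (f xs + t * \<Delta>)\<^sup>2 / g (xs + t *\<^sub>R d) + h1 (xs + t *\<^sub>R d) - t * (w \<bullet> d)
        - ((f xs)\<^sup>2 / g xs + h1 xs))"
    define D0 where "D0 = (2 * f xs * \<Delta> * g xs - (f xs)\<^sup>2 * (d \<bullet> Dg xs)) / (g xs)\<^sup>2 + d \<bullet> Dh1 xs - w \<bullet> d"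
    have der: "(\<phi> has_real_derivative D0) (at 0)"
    proof -
      have dg: "((\<lambda>t. g (xs + t *\<^sub>R d)) has_real_derivative d \<bullet> Dg xs) (at 0)"
        by (rule line_deriv[OF g_grad])
      have dh: "((\<lambda>t. h1 (xs + t *\<^sub>R d)) has_real_derivative d \<bullet> Dh1 xs) (at 0)"
        by (rule line_deriv[OF h1_grad])
      have dq: "((\<lambda>t. (f xs + t * \<Delta>)\<^sup>2) has_real_derivative (2 * f xs * \<Delta>)) (at 0)"
        by (auto intro!: derivative_eq_intros)
      have g0: "g (xs + 0 *\<^sub>R d) \<noteq> 0" using gs0 by simp
      note d1 = DERIV_quotient[OF dq dg g0]
      have d2: "((\<lambda>t. t * (w \<bullet> d)) has_real_derivative w \<bullet> d) (at 0)"
        by (auto intro!: derivative_eq_intros)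
      have "(\<phi> has_real_derivative
          ((2 * f xs * \<Delta>) * g (xs + 0 *\<^sub>R d) - (d \<bullet> Dg xs) * (f xs + 0 * \<Delta>)\<^sup>2) / (g (xs + 0 *\<^sub>R d) ^ Suc (Suc 0))
           + d \<bullet> Dh1 xs - w \<bullet> d - 0) (at 0)"
        unfolding \<phi>_def by (intro DERIV_diff DERIV_add d1 dh d2 DERIV_const)
      moreover have "((2 * f xs * \<Delta>) * g (xs + 0 *\<^sub>R d) - (d \<bullet> Dg xs) * (f xs + 0 * \<Delta>)\<^sup>2) / (g (xs + 0 *\<^sub>R d) ^ Suc (Suc 0))
           + d \<bullet> Dh1 xs - w \<bullet> d - 0 = D0"
        unfolding D0_def by (simp add: power2_eq_square mult.commute)
      ultimately show ?thesis by simp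
    qed
    have nonneg: "\<phi> t \<ge> 0" if t: "0 < t" "t < t0" for t
    proof -
      define xt where "xt = xs + t *\<^sub>R d"
      have t1: "t \<le> 1" using t unfolding t0_def by simp
      have "t < r / (norm d + 1)" using t unfolding t0_def by simp
      then have "t * (norm d + 1) < r" using nd by (simp add: field_simps)
      moreover have "t * norm d \<le> t * (norm d + 1)" using t by simp
      ultimately have tn: "t * norm d < r" by linarith
      have dist: "dist xs xt < r" unfolding xt_def dist_norm using t tn by simp
      have xt_eq: "xt = (1 - t) *\<^sub>R xs + t *\<^sub>R y"
        unfolding xt_def d_def by (simp add: algebra_simps)
      have xtC: "xt \<in> C" unfolding xt_eq
        using convexD[OF C_convex xsC yC, of "1 - t" t] t t1 by simp
      have gxt: "g xt \<noteq> 0" using \<delta>(2)[of xt] dist unfolding r_def by simp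
      have gxtpos: "g xt > 0" using gxt g_nonneg[of xt] by linarith
      have xtb: "xt \<in> ball xs e" using dist unfolding r_def by simp
      have fc: "f xt \<le> (1 - t) * f xs + t * f y"
        unfolding xt_eq using convex_onD[OF f_convex, of t xs y] t t1 by simp
      then have fc2: "f xt \<le> f xs + t * \<Delta>" unfolding \<Delta>_def by (simp add: algebra_simps)
      have "(f xt)\<^sup>2 \<le> (f xs + t * \<Delta>)\<^sup>2"
        using power_mono[OF fc2 f_nonneg[of xt], of 2] by simp
      then have sq: "(f xt)\<^sup>2 / g xt \<le> (f xs + t * \<Delta>)\<^sup>2 / g xt"
        using gxtpos by (simp add: divide_right_mono)
      have L: "(f xs)\<^sup>2 / g xs + h1 xs - h2 xs \<le> (f xt)\<^sup>2 / g xt + h1 xt - h2 xt"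
        by (rule lm[OF xtC gxt xtb])
      have W: "h2 xs + t * (w \<bullet> d) \<le> h2 xt"
        using w[of xt] unfolding xt_def by simp
      show ?thesis unfolding \<phi>_def using sq L W unfolding xt_def by linarith
    qed
    have "\<phi> 0 = 0" unfolding \<phi>_def by simp
    have D0: "D0 \<ge> 0"
    proof (rule ccontr)
      assume "\<not> D0 \<ge> 0"
      then have "D0 < 0" by simp
      from DERIV_neg_dec_right[OF der this] obtain dd where dd: "dd > 0"
        "\<And>h. h > 0 \<Longrightarrow> h < dd \<Longrightarrow> \<phi> (0 + h) < \<phi> 0" by blast
      define h where "h = min dd t0 / 2"
      have "h > 0" "h < dd" "h < t0" using dd t0 unfolding h_def by auto
      then show False using dd(2)[of h] nonneg[of h] \<open>\<phi> 0 = 0\<close> by simp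
    qed
    have "D0 = 2 * c * \<Delta> - c\<^sup>2 * (d \<bullet> Dg xs) + d \<bullet> Dh1 xs - w \<bullet> d"
      unfolding D0_def fxs using gspos by (simp add: field_simps power2_eq_square)
    then show ?thesis using D0 unfolding u_def d_def \<Delta>_def
      by (simp add: algebra_simps inner_commute)
  qed
  have "u \<in> subdiff (\<lambda>y. ereal (2 * c * f y) + ind_fun C y) xs"
    unfolding subdiff_def
  proof (intro CollectI conjI allI)
    show "\<bar>ereal (2 * c * f xs) + ind_fun C xs\<bar> \<noteq> \<infinity>"
      using xsC by (simp add: ind_fun_def)
    fix y
    show "ereal (2 * c * f xs) + ind_fun C xs + ereal (u \<bullet> (y - xs)) \<le> ereal (2 * c * f y) + ind_fun C y"
    proof (cases "y \<in> C")
      case True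
      then show ?thesis using main[OF True] xsC by (simp add: ind_fun_def)
    next
      case False
      then show ?thesis using xsC by (simp add: ind_fun_def)
    qed
  qed
  moreover have "w \<in> subdiff (\<lambda>y. ereal (h2 y)) xs"
    unfolding subdiff_def using w by simp
  moreover have "0 = u - c\<^sup>2 *\<^sub>R Dg xs + Dh1 xs - w"
    unfolding u_def by simp
  ultimately show ?thesis unfolding Let_def c_def by blast
qed

end
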